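(* For any $\beta>0$, the mixing time of the column dynamics $\mathcal M^{\mathrm{col}}_n$ is $O(n^3\log n)$.
   Context: Fix $\beta>0$ and an integer $n\ge1$. Configurations are $\eta\in\Omega_n=\{0,\dots,n\}^n$ with boundary values $\eta(0)=\eta(n+1)=0$, and the SOS Gibbs distribution is $\mu(\eta)\propto\exp\{-\beta\sum_{i=1}^{n+1}|\eta(i-1)-\eta(i)|\}$. The column dynamics $\mathcal M^{\mathrm{col}}_n$ is the Markov chain on $\Omega_n$ that, from $\eta$, picks $i\in\{1,\dots,n\}$ uniformly at random and replaces $\eta(i)$ by $j\in\{0,\dots,n\}$ with probability proportional to $\mu(\eta^j)$, where $\eta^j$ is $\eta$ with $\eta(i)$ replaced by $j$. Mixing time: $\tau^{\mathrm{mix}}=\min\{t:\|\nu_t^\xi-\mu\|_{TV}\le 1/(2e)\ \forall\xi\in\Omega_n\}$, with $\nu_t^\xi$ the law at time $t$ started at $\xi$. *)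

theory Defs
  imports "HOL-Analysis.Analysis" "HOL-Library.Landau_Symbols"
begin

text \<open>Configurations: eta :: nat => nat with eta i in {0..n} for i in {1..n}
  and eta i = 0 otherwise (in particular the boundary values eta 0 = eta (n+1) = 0).\<close>
definition sos_Omega :: "nat \<Rightarrow> (nat \<Rightarrow> nat) set" where
  "sos_Omega n = {\<eta>. (\<forall>i\<in>{1..n}. \<eta> i \<le> n) \<and> (\<forall>i. i \<notin> {1..n} \<longrightarrow> \<eta> i = 0)}"

definition sos_weight :: "real \<Rightarrow> nat \<Rightarrow> (nat \<Rightarrow> nat) \<Rightarrow> real" where
  "sos_weight \<beta> n \<eta> =
     exp (- \<beta> * (\<Sum>i=1..n+1. \<bar>real (\<eta> (i - 1)) - real (\<eta> i)\<bar>))"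

definition sos_mu :: "real \<Rightarrow> nat \<Rightarrow> (nat \<Rightarrow> nat) \<Rightarrow> real" where
  "sos_mu \<beta> n \<eta> =
     (if \<eta> \<in> sos_Omega n
      then sos_weight \<beta> n \<eta> / (\<Sum>\<zeta>\<in>sos_Omega n. sos_weight \<beta> n \<zeta>) else 0)"

text \<open>Transition probability of the column dynamics from eta to xi: pick column i
  uniformly in {1..n}, resample its height j in {0..n} proportionally to mu(eta^j).\<close>
definition col_P :: "real \<Rightarrow> nat \<Rightarrow> (nat \<Rightarrow> nat) \<Rightarrow> (nat \<Rightarrow> nat) \<Rightarrow> real" where
  "col_P \<beta> n \<eta> \<xi> =
     (\<Sum>i=1..n. (1 / real n) *
        (\<Sum>j=0..n. (if \<xi> = \<eta>(i := j) then
           sos_mu \<beta> n (\<eta>(i := j)) / (\<Sum>k=0..n. sos_mu \<beta> n (\<eta>(i := k))) else 0)))"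

fun col_law :: "real \<Rightarrow> nat \<Rightarrow> nat \<Rightarrow> (nat \<Rightarrow> nat) \<Rightarrow> (nat \<Rightarrow> nat) \<Rightarrow> real" where
  "col_law \<beta> n 0 \<xi> \<eta> = (if \<eta> = \<xi> then 1 else 0)"
| "col_law \<beta> n (Suc t) \<xi> \<eta> =
     (\<Sum>\<zeta>\<in>sos_Omega n. col_law \<beta> n t \<xi> \<zeta> * col_P \<beta> n \<zeta> \<eta>)"

definition tv_dist :: "nat \<Rightarrow> ((nat \<Rightarrow> nat) \<Rightarrow> real) \<Rightarrow> ((nat \<Rightarrow> nat) \<Rightarrow> real) \<Rightarrow> real" where
  "tv_dist n p q = (1/2) * (\<Sum>\<eta>\<in>sos_Omega n. \<bar>p \<eta> - q \<eta>\<bar>)"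

definition col_mixing_time :: "real \<Rightarrow> nat \<Rightarrow> nat" where
  "col_mixing_time \<beta> n =
     (LEAST t. \<forall>\<xi>\<in>sos_Omega n.
        tv_dist n (col_law \<beta> n t \<xi>) (sos_mu \<beta> n) \<le> 1 / (2 * exp 1))"

end

theory Submission
  imports Defs
begin

lemma core_case1:
  fixes y L P B Q1 G1 q r p R :: real
  assumes y: "0<y" "y<1" and q: "0 \<le> q" "q \<le> y" and r: "0 \<le> r" "r \<le> y"
    and L: "L \<ge> 0" and p: "p \<ge> 0" and R: "R \<ge> 1"
    and hP: "(1-y)*P = y - q" and hB: "(1-y)*B = y - r" and hQ: "(1-y)*Q1 = P - p*q"
    and hG: "(1-y)*G1 = B - R*r"
  shows "2*(1-y)*(B*(L*(L-1)/2 + (L-1)*P + Q1) + (L+P)*G1) \<le> ((L+P)+B)*(y*(L+P)+B)"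
proof -
  define z where "z = 1 - y"
  have ne: "z \<noteq> 0" using y by (simp add: z_def)
  have yz: "y = 1 - z" by (simp add: z_def)
  have P: "P = (y-q)/z" using hP ne by (simp add: field_simps z_def)
  have B: "B = (y-r)/z" using hB ne by (simp add: field_simps z_def)
  have Q: "Q1 = (P-p*q)/z" using hQ ne by (simp add: field_simps z_def)
  have G: "G1 = (B-R*r)/z" using hG ne by (simp add: field_simps z_def)
  define e where "e = (1-y)^2*r*L*L+(1-y)*L*(2*r*(y-q)+2*R*r*(1-y))+(r-q)^2+(1-y)*(q+r)*(y-q)
     +2*(R-1)*r*(1-y)*(y-q)+2*p*q*(1-y)*(y-r)"
  have e0: "e \<ge> 0" unfolding e_def using y q r L p R
    by (intro add_nonneg_nonneg mult_nonneg_nonneg) auto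
  have id: "(1-y)^2 * (((L+P)+B)*(y*(L+P)+B) - 2*(1-y)*(B*(L*(L-1)/2 + (L-1)*P + Q1) + (L+P)*G1)) = e"
    unfolding e_def Q G unfolding P B yz using ne by (simp add: field_simps) (simp add: algebra_simps power2_eq_square)
  have "(1-y)^2 > 0" using y by simp
  with id e0 have "((L+P)+B)*(y*(L+P)+B) - 2*(1-y)*(B*(L*(L-1)/2 + (L-1)*P + Q1) + (L+P)*G1) \<ge> 0"
    by (metis zero_le_mult_iff not_le less_le)
  thus ?thesis by simp
qed

lemma core_case2:
  fixes y M P B Q1 G1 q r p R :: real
  assumes y: "0<y" "y<1" and q: "0 \<le> q" "q \<le> y" and r: "0 \<le> r" "r \<le> y"
    and M: "M \<ge> 0" and p: "p \<ge> 0" and R: "R \<ge> 0"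
    and hP: "(1-y)*P = y - q" and hB: "(1-y)*B = y - r" and hQ: "(1-y)*Q1 = P - p*q"
    and hG: "(1-y)*G1 = B - R*r"
  shows "2*(1-y)*((M+B)*Q1 + (1+P)*(M*(M+1)/2+M*B+G1)) \<le> ((1+P)+(M+B))*(y*(1+P)+(M+B))"
proof -
  define z where "z = 1 - y"
  have ne: "z \<noteq> 0" using y by (simp add: z_def)
  have yz: "y = 1 - z" by (simp add: z_def)
  have P: "P = (y-q)/z" using hP ne by (simp add: field_simps z_def)
  have B: "B = (y-r)/z" using hB ne by (simp add: field_simps z_def)
  have Q: "Q1 = (P-p*q)/z" using hQ ne by (simp add: field_simps z_def)
  have G: "G1 = (B-R*r)/z" using hG ne by (simp add: field_simps z_def)
  define e where "e = (1-y)^2*q*M*M+(1-y)*M*(2*q*(1-r)+2*p*q*(1-y))+(r-q)^2+(1-y)*(q*(y-q)+r*(1-q))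
     +2*p*q*(1-y)*(y-r)+2*R*r*(1-y)*(1-q)"
  have e0: "e \<ge> 0" unfolding e_def using y q r M p R
    by (intro add_nonneg_nonneg mult_nonneg_nonneg) auto
  have id: "(1-y)^2 * (((1+P)+(M+B))*(y*(1+P)+(M+B)) - 2*(1-y)*((M+B)*Q1 + (1+P)*(M*(M+1)/2+M*B+G1))) = e"
    unfolding e_def Q G unfolding P B yz using ne by (simp add: field_simps) (simp add: algebra_simps power2_eq_square)
  have "(1-y)^2 > 0" using y by simp
  with id e0 have "((1+P)+(M+B))*(y*(1+P)+(M+B)) - 2*(1-y)*((M+B)*Q1 + (1+P)*(M*(M+1)/2+M*B+G1)) \<ge> 0"
    by (metis zero_le_mult_iff not_le)
  thus ?thesis by simp
qed

lemma core_alg: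
  fixes y L M P B Q1 G1 q r p R :: real
  assumes y: "0<y" "y<1" and q: "0 \<le> q" "q \<le> y" and r: "0 \<le> r" "r \<le> y"
    and L: "L \<ge> 1" and M: "M \<ge> 0" and p: "p \<ge> 0" and R: "R \<ge> 0"
    and LM: "L = 1 \<or> M = 0" and MR: "M = 0 \<Longrightarrow> R \<ge> 1"
    and hP: "(1-y)*P = y - q" and hB: "(1-y)*B = y - r" and hQ: "(1-y)*Q1 = P - p*q"
    and hG: "(1-y)*G1 = B - R*r"
  shows "2*(1-y)*((M+B)*(L*(L-1)/2+(L-1)*P+Q1) + (L+P)*(M*(M+1)/2+M*B+G1))
     \<le> ((L+P)+(M+B))*(y*(L+P)+(M+B))"
proof (cases "M = 0")
  case True
  then show ?thesis using core_case1[OF y q r _ p MR[OF True] hP hB hQ hG, of L] L by simp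
next
  case False
  then have "L = 1" using LM by simp
  then show ?thesis using core_case2[OF y q r M p R hP hB hQ hG] by simp
qed

definition gsA :: "real \<Rightarrow> nat \<Rightarrow> real" where "gsA y p = (\<Sum>k=1..p. y^k)"
definition gsB :: "real \<Rightarrow> nat \<Rightarrow> real" where "gsB y p = (\<Sum>k=1..p. real k * y^k)"

lemma gsA_Suc: "gsA y (Suc p) = gsA y p + y^(Suc p)"
  by (simp add: gsA_def)
lemma gsB_Suc: "gsB y (Suc p) = gsB y p + real (Suc p) * y^(Suc p)"
  by (simp add: gsB_def)

lemma gsA_closed: "(1-y)*gsA y p = y - y^(p+1)"
proof (induction p)
  case 0 then show ?case by (simp add: gsA_def)
next
  case (Suc p)
  have "(1-y)*gsA y (Suc p) = (1-y)*gsA y p + (1-y)*y^(Suc p)" by (simp add: gsA_Suc algebra_simps)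
  also have "\<dots> = y - y^(Suc p + 1)" using Suc by (simp add: algebra_simps)
  finally show ?case .
qed

lemma gsB_closed: "(1-y)*gsB y p = gsA y p - real p * y^(p+1)"
proof (induction p)
  case 0 then show ?case by (simp add: gsA_def gsB_def)
next
  case (Suc p)
  have "(1-y)*gsB y (Suc p) = (1-y)*gsB y p + (1-y)*real (Suc p) * y^(Suc p)"
    by (simp add: gsB_Suc algebra_simps)
  also have "\<dots> = gsA y (Suc p) - real (Suc p) * y^(Suc p + 1)"
    using Suc by (simp add: gsA_Suc algebra_simps)
  finally show ?case .
qed

definition fg :: "real \<Rightarrow> nat \<Rightarrow> nat \<Rightarrow> real" where
  "fg y L s = (if s < L then 1 else y^(s-L+1))"

lemma gauss_real: "(\<Sum>s<L. real s) = real L * (real L - 1)/2"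
  by (induction L) (simp_all add: algebra_simps)

lemma fg_sum0: "(\<Sum>s<L+p. fg y L s) = real L + gsA y p"
proof (induction p)
  case 0 then show ?case by (simp add: fg_def gsA_def)
next
  case (Suc p)
  have "(\<Sum>s<L+Suc p. fg y L s) = (\<Sum>s<L+p. fg y L s) + fg y L (L+p)" by simp
  also have "fg y L (L+p) = y^(Suc p)" by (simp add: fg_def)
  finally show ?case using Suc by (simp add: gsA_Suc)
qed

lemma fg_sum1: "(\<Sum>s<L+p. real s * fg y L s) = real L*(real L-1)/2 + (real L-1)*gsA y p + gsB y p"
proof (induction p)
  case 0 then show ?case by (simp add: fg_def gsA_def gsB_def gauss_real)
next
  case (Suc p)
  have "(\<Sum>s<L+Suc p. real s * fg y L s) = (\<Sum>s<L+p. real s * fg y L s) + real (L+p) * fg y L (L+p)" by simp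
  also have "fg y L (L+p) = y^(Suc p)" by (simp add: fg_def)
  finally show ?case using Suc by (simp add: gsA_Suc gsB_Suc algebra_simps)
qed

definition cw :: "real \<Rightarrow> nat \<Rightarrow> nat \<Rightarrow> nat \<Rightarrow> real" where
  "cw \<beta> a b j = exp (-\<beta> * (\<bar>real a - real j\<bar> + \<bar>real j - real b\<bar>))"

lemma cw_pos: "cw \<beta> a b j > 0" by (simp add: cw_def)

lemma cw_shape:
  assumes "\<bar>real a - real j\<bar> + \<bar>real j - real b\<bar> = \<bar>real a - real b\<bar> + 2*real k"
  shows "cw \<beta> a b j = exp(-\<beta>*\<bar>real a - real b\<bar>) * exp(-2*\<beta>)^k"
proof -
  have "cw \<beta> a b j = exp(-\<beta>*\<bar>real a - real b\<bar> + real k * (-2*\<beta>))"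
    unfolding cw_def assms by (simp add: algebra_simps)
  also have "\<dots> = exp(-\<beta>*\<bar>real a - real b\<bar>) * exp(-2*\<beta>)^k"
    by (subst exp_add) (simp only: exp_of_nat_mult)
  finally show ?thesis .
qed

lemma cw_left:
  assumes "s \<le> a"
  shows "cw \<beta> a b (a - s) = exp(-\<beta>*\<bar>real a - real b\<bar>) * fg (exp(-2*\<beta>)) (if b \<le> a then a - b + 1 else 1) s"
proof (cases "s < (if b \<le> a then a - b + 1 else 1)")
  case True
  have "\<bar>real a - real (a-s)\<bar> + \<bar>real (a-s) - real b\<bar> = \<bar>real a - real b\<bar> + 2*real 0"
    using True assms by (auto split: if_splits simp: of_nat_diff abs_if)
  then show ?thesis using True by (simp add: cw_shape fg_def del: of_nat_0)
next
  case False
  have "\<bar>real a - real (a-s)\<bar> + \<bar>real (a-s) - real b\<bar> = \<bar>real a - real b\<bar> + 2*real (s - (if b \<le> a then a - b + 1 else 1) + 1)"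
    using False assms by (auto split: if_splits simp: of_nat_diff abs_if)
  then show ?thesis using False by (simp only: cw_shape fg_def if_False)
qed

lemma cw_right:
  assumes "1 \<le> t"
  shows "cw \<beta> a b (a + t) = exp(-\<beta>*\<bar>real a - real b\<bar>) * fg (exp(-2*\<beta>)) ((if b \<le> a then 0 else b - a) + 1) t"
proof (cases "t < (if b \<le> a then 0 else b - a) + 1")
  case True
  have "\<bar>real a - real (a+t)\<bar> + \<bar>real (a+t) - real b\<bar> = \<bar>real a - real b\<bar> + 2*real 0"
    using True assms by (auto split: if_splits simp: of_nat_diff abs_if)
  then show ?thesis using True by (simp add: cw_shape fg_def del: of_nat_0)
next
  case False
  have "\<bar>real a - real (a+t)\<bar> + \<bar>real (a+t) - real b\<bar> = \<bar>real a - real b\<bar> + 2*real (t - ((if b \<le> a then 0 else b - a) + 1) + 1)"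
    using False assms by (auto split: if_splits simp: of_nat_diff abs_if)
  then show ?thesis using False by (simp only: cw_shape fg_def if_False)
qed

lemma cw_core:
  fixes \<beta> :: real and a b n :: nat
  assumes \<beta>: "\<beta> > 0" and an: "a < n" and bn: "b \<le> n"
  defines "y \<equiv> exp(-2*\<beta>)"
  defines "A \<equiv> (\<Sum>j=0..a. cw \<beta> a b j)" and "B \<equiv> (\<Sum>j=Suc a..n. cw \<beta> a b j)"
  defines "U \<equiv> (\<Sum>j=0..a. cw \<beta> a b j * (real a - real j))"
    and "V \<equiv> (\<Sum>j=Suc a..n. cw \<beta> a b j * (real j - real a))"
  shows "2*(1-y)*(B*U + A*V) \<le> (A+B)*(y*A+B)"
proof -
  define c where "c = exp(-\<beta>*\<bar>real a - real b\<bar>)"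
  define L where "L = (if b \<le> a then a - b + 1 else 1)"
  define M where "M = (if b \<le> a then 0 else b - a)"
  define p where "p = a + 1 - L"
  define R where "R = n - a - M"
  have L1: "L \<ge> 1" by (simp add: L_def)
  have Lp: "L + p = Suc a" by (simp add: L_def p_def)
  have MR: "M + 1 + R = Suc (n - a)" using an bn by (simp add: M_def R_def)
  have y0: "0 < y" "y < 1" using \<beta> by (simp_all add: y_def)
  have left: "\<And>f::nat\<Rightarrow>real. (\<Sum>j=0..a. f j) = (\<Sum>s<L+p. f (a - s))"
  proof -
    fix f :: "nat \<Rightarrow> real"
    have "(\<Sum>j=0..a. f j) = (\<Sum>s=0..a. f (a + 0 - s))" by (rule sum.atLeastAtMost_rev)
    moreover have "{0..a} = {..<L+p}" using Lp by auto
    ultimately show "(\<Sum>j=0..a. f j) = (\<Sum>s<L+p. f (a - s))" by simp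
  qed
  have right: "\<And>f::nat\<Rightarrow>real. (\<Sum>j=Suc a..n. f j) = (\<Sum>t=1..n-a. f (t + a))"
  proof -
    fix f :: "nat \<Rightarrow> real"
    have "(\<Sum>j=1+a..(n-a)+a. f j) = (\<Sum>t=1..n-a. f (t + a))" by (rule sum.shift_bounds_cl_nat_ivl)
    then show "(\<Sum>j=Suc a..n. f j) = (\<Sum>t=1..n-a. f (t + a))" using an by simp
  qed
  have right0: "\<And>f::nat\<Rightarrow>real. (\<Sum>t<M+1+R. f t) = f 0 + (\<Sum>t=1..n-a. f t)"
  proof -
    fix f :: "nat \<Rightarrow> real"
    have "{..<M+1+R} = insert 0 {1..n-a}" using MR by auto
    then show "(\<Sum>t<M+1+R. f t) = f 0 + (\<Sum>t=1..n-a. f t)" by simp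
  qed
  have cwl: "\<And>s. s < L + p \<Longrightarrow> cw \<beta> a b (a - s) = c * fg y L s"
    using cw_left Lp unfolding c_def L_def y_def by fastforce
  have cwr: "\<And>t. t \<in> {1..n-a} \<Longrightarrow> cw \<beta> a b (t + a) = c * fg y (M+1) t"
    using cw_right unfolding c_def M_def y_def by (fastforce simp: add.commute)
  have A': "A = c * (real L + gsA y p)"
  proof -
    have "A = (\<Sum>s<L+p. c * fg y L s)" unfolding A_def left by (rule sum.cong) (auto simp: cwl)
    then show ?thesis by (simp add: sum_distrib_left[symmetric] fg_sum0)
  qed
  have U': "U = c * (real L*(real L-1)/2 + (real L-1)*gsA y p + gsB y p)"
  proof -
    have "U = (\<Sum>s<L+p. c * (real s * fg y L s))" unfolding U_def left
      by (rule sum.cong) (auto simp: cwl Lp of_nat_diff)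
    then show ?thesis by (simp add: sum_distrib_left[symmetric] fg_sum1)
  qed
  have B': "B = c * (real M + gsA y R)"
  proof -
    have "B = (\<Sum>t=1..n-a. c * fg y (M+1) t)" unfolding B_def right by (rule sum.cong) (auto simp: cwr)
    also have "\<dots> = c * ((\<Sum>t<M+1+R. fg y (M+1) t) - 1)"
    proof -
      have "fg y (M+1) 0 = 1" by (simp add: fg_def)
      then show ?thesis using right0[of "fg y (M+1)"] by (simp add: sum_distrib_left[symmetric])
    qed
    also have "\<dots> = c * ((real (M+1) + gsA y R) - 1)" using fg_sum0[where y=y and L="M+1" and p=R] by simp
    finally show ?thesis by simp
  qed
  have V': "V = c * (real M*(real M+1)/2 + real M*gsA y R + gsB y R)"
  proof -
    have "V = (\<Sum>t=1..n-a. c * (real t * fg y (M+1) t))" unfolding V_def right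
      by (rule sum.cong) (auto simp: cwr)
    also have "\<dots> = c * (\<Sum>t<M+1+R. real t * fg y (M+1) t)"
      using right0[of "\<lambda>t. real t * fg y (M+1) t"] by (simp add: sum_distrib_left[symmetric])
    also have "\<dots> = c * (real (M+1)*(real (M+1)-1)/2 + (real (M+1)-1)*gsA y R + gsB y R)"
      using fg_sum1[where y=y and L="M+1" and p=R] by simp
    finally show ?thesis by (simp add: algebra_simps)
  qed
  have core: "2*(1-y)*((real M+gsA y R)*(real L*(real L-1)/2+(real L-1)*gsA y p+gsB y p)
      + (real L+gsA y p)*(real M*(real M+1)/2+real M*gsA y R+gsB y R))
     \<le> ((real L+gsA y p)+(real M+gsA y R))*(y*(real L+gsA y p)+(real M+gsA y R))"
  proof (rule core_alg[where q="y^(p+1)" and r="y^(R+1)" and p="real p" and R="real R"])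
    show "0 \<le> y^(p+1)" "0 \<le> y^(R+1)" using y0 by simp_all
    show "y^(p+1) \<le> y" "y^(R+1) \<le> y" using y0 by (simp_all add: power_le_one mult_left_le)
    show "real L = 1 \<or> real M = 0" by (simp add: L_def M_def)
    show "real M = 0 \<Longrightarrow> 1 \<le> real R" using an by (simp add: M_def R_def split: if_splits)
  qed (use y0 L1 gsA_closed gsB_closed in auto)
  have c0: "c > 0" by (simp add: c_def)
  have "2*(1-y)*(B*U + A*V) = c^2 * (2*(1-y)*((real M+gsA y R)*(real L*(real L-1)/2+(real L-1)*gsA y p+gsB y p)
      + (real L+gsA y p)*(real M*(real M+1)/2+real M*gsA y R+gsB y R)))"
    unfolding A' B' U' V' by (simp add: power2_eq_square algebra_simps)
  also have "\<dots> \<le> c^2 * (((real L+gsA y p)+(real M+gsA y R))*(y*(real L+gsA y p)+(real M+gsA y R)))"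
    using core c0 by (intro mult_left_mono) auto
  also have "\<dots> = (A+B)*(y*A+B)"
    unfolding A' B' by (simp add: power2_eq_square algebra_simps)
  finally show ?thesis .
qed

definition cp :: "real \<Rightarrow> nat \<Rightarrow> nat \<Rightarrow> nat \<Rightarrow> nat \<Rightarrow> real" where
  "cp \<beta> n a b j = cw \<beta> a b j / (\<Sum>k=0..n. cw \<beta> a b k)"

lemma split_sum_at:
  fixes f :: "nat \<Rightarrow> real"
  assumes "a < n"
  shows "(\<Sum>j=0..n. f j) = (\<Sum>j=0..a. f j) + (\<Sum>j=Suc a..n. f j)"
proof -
  have "{0..n} = {0..a} \<union> {Suc a..n}" using assms by auto
  moreover have "{0..a} \<inter> {Suc a..n} = {}" by auto
  ultimately show ?thesis by (simp add: sum.union_disjoint)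
qed

lemma oneD:
  fixes \<beta> C :: real and a b n :: nat and G :: "nat \<Rightarrow> real"
  assumes \<beta>: "\<beta> > 0" and an: "a < n" and bn: "b \<le> n" and C: "C \<ge> 0"
    and G: "\<And>j j'. j \<le> n \<Longrightarrow> j' \<le> n \<Longrightarrow> \<bar>G j - G j'\<bar> \<le> C * \<bar>real j - real j'\<bar>"
  shows "\<bar>(\<Sum>j=0..n. cp \<beta> n (Suc a) b j * G j) - (\<Sum>j=0..n. cp \<beta> n a b j * G j)\<bar> \<le> C/2"
proof -
  define x where "x = exp(-\<beta>)"
  define z where "z = exp \<beta>"
  define y where "y = exp(-2*\<beta>)"
  have xz: "x * z = 1" by (simp add: x_def z_def flip: exp_add)
  have yx: "y = x * x" by (simp add: x_def y_def flip: exp_add)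
  have x0: "x > 0" "z > 0" by (simp_all add: x_def z_def)
  have y0: "0 < y" "y < 1" using \<beta> by (simp_all add: y_def)
  define e where "e = cw \<beta> a b"
  define e' where "e' = cw \<beta> (Suc a) b"
  have eL: "\<And>j. j \<le> a \<Longrightarrow> e' j = x * e j"
  proof -
    fix j assume "j \<le> a"
    then have "\<bar>real (Suc a) - real j\<bar> = \<bar>real a - real j\<bar> + 1" by auto
    then show "e' j = x * e j" unfolding e'_def e_def cw_def x_def
      by (simp add: algebra_simps flip: exp_add)
  qed
  have eR: "\<And>j. Suc a \<le> j \<Longrightarrow> e' j = z * e j"
  proof -
    fix j assume "Suc a \<le> j"
    then have "\<bar>real (Suc a) - real j\<bar> = \<bar>real a - real j\<bar> - 1" by auto
    then show "e' j = z * e j" unfolding e'_def e_def cw_def z_def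
      by (simp add: algebra_simps flip: exp_add)
  qed
  define A where "A = (\<Sum>j=0..a. e j)"
  define B where "B = (\<Sum>j=Suc a..n. e j)"
  define GL where "GL = (\<Sum>j=0..a. e j * G j)"
  define GR where "GR = (\<Sum>j=Suc a..n. e j * G j)"
  define U where "U = (\<Sum>j=0..a. e j * (real a - real j))"
  define V where "V = (\<Sum>j=Suc a..n. e j * (real j - real a))"
  have epos: "\<And>j. e j > 0" by (simp add: e_def cw_pos)
  have A0: "A > 0" unfolding A_def using epos by (intro sum_pos) auto
  have B0: "B \<ge> 0" unfolding B_def using epos by (intro sum_nonneg) (auto intro: less_imp_le)
  have core: "2*(1-y)*(B*U + A*V) \<le> (A+B)*(y*A+B)"
    using cw_core[OF \<beta> an bn] unfolding A_def B_def U_def V_def e_def y_def .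
  have S: "(\<Sum>k=0..n. e k) = A + B" unfolding A_def B_def by (rule split_sum_at[OF an])
  have S': "(\<Sum>k=0..n. e' k) = x*A + z*B"
  proof -
    have "(\<Sum>k=0..n. e' k) = (\<Sum>k=0..a. e' k) + (\<Sum>k=Suc a..n. e' k)" by (rule split_sum_at[OF an])
    also have "(\<Sum>k=0..a. e' k) = x*A" unfolding A_def sum_distrib_left by (rule sum.cong) (auto simp: eL)
    also have "(\<Sum>k=Suc a..n. e' k) = z*B" unfolding B_def sum_distrib_left by (rule sum.cong) (auto simp: eR)
    finally show ?thesis .
  qed
  have T: "(\<Sum>j=0..n. cp \<beta> n a b j * G j) = (GL + GR)/(A+B)"
  proof -
    have "(\<Sum>j=0..n. cp \<beta> n a b j * G j) = (\<Sum>j=0..n. e j * G j)/(A+B)"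
      unfolding cp_def e_def[symmetric] S by (simp add: sum_divide_distrib)
    also have "(\<Sum>j=0..n. e j * G j) = GL + GR" unfolding GL_def GR_def by (rule split_sum_at[OF an])
    finally show ?thesis .
  qed
  have T': "(\<Sum>j=0..n. cp \<beta> n (Suc a) b j * G j) = (x*GL + z*GR)/(x*A+z*B)"
  proof -
    have "(\<Sum>j=0..n. cp \<beta> n (Suc a) b j * G j) = (\<Sum>j=0..n. e' j * G j)/(x*A+z*B)"
      unfolding cp_def e'_def[symmetric] S' by (simp add: sum_divide_distrib)
    also have "(\<Sum>j=0..n. e' j * G j) = (\<Sum>j=0..a. e' j * G j) + (\<Sum>j=Suc a..n. e' j * G j)"
      by (rule split_sum_at[OF an])
    also have "(\<Sum>j=0..a. e' j * G j) = x*GL" unfolding GL_def sum_distrib_left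
      by (rule sum.cong) (auto simp: eL)
    also have "(\<Sum>j=Suc a..n. e' j * G j) = z*GR" unfolding GR_def sum_distrib_left
      by (rule sum.cong) (auto simp: eR)
    finally show ?thesis .
  qed
  have T'': "(x*GL + z*GR)/(x*A+z*B) = (y*GL + GR)/(y*A+B)"
  proof -
    have "x*(x*GL + z*GR) = y*GL + GR" "x*(x*A+z*B) = y*A+B"
      using xz unfolding yx by (simp_all add: algebra_simps)
    then show ?thesis using x0 by (metis mult_divide_mult_cancel_left_if less_irrefl)
  qed
  have yAB: "y*A + B > 0" using y0 A0 B0 by (simp add: add_pos_nonneg)
  have diff: "(y*GL + GR)/(y*A+B) - (GL + GR)/(A+B) = (1-y)*(A*GR - B*GL)/((A+B)*(y*A+B))"
    using yAB A0 B0 by (simp add: field_simps)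
  have prod: "A*GR - B*GL = (\<Sum>i=0..a. \<Sum>j=Suc a..n. e i * e j * (G j - G i))"
  proof -
    have "A*GR = (\<Sum>i=0..a. \<Sum>j=Suc a..n. e i * (e j * G j))" unfolding A_def GR_def by (rule sum_product)
    moreover have "B*GL = (\<Sum>i=0..a. \<Sum>j=Suc a..n. (e i * G i) * e j)"
      unfolding B_def GL_def mult.commute[of "sum e _"] by (rule sum_product)
    ultimately have "A*GR - B*GL = (\<Sum>i=0..a. (\<Sum>j=Suc a..n. e i * (e j * G j)) - (\<Sum>j=Suc a..n. (e i * G i) * e j))"
      by (simp only: sum_subtractf)
    also have "\<dots> = (\<Sum>i=0..a. \<Sum>j=Suc a..n. e i * e j * (G j - G i))"
      by (simp only: sum_subtractf[symmetric]) (simp add: algebra_simps)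
    finally show ?thesis .
  qed
  have KUV: "(\<Sum>i=0..a. \<Sum>j=Suc a..n. e i * e j * (C * (real j - real i))) = C * (B*U + A*V)"
  proof -
    have h1: "U*B = (\<Sum>i=0..a. \<Sum>j=Suc a..n. (e i * (real a - real i)) * e j)" unfolding U_def B_def by (rule sum_product)
    have h2: "A*V = (\<Sum>i=0..a. \<Sum>j=Suc a..n. e i * (e j * (real j - real a)))" unfolding A_def V_def by (rule sum_product)
    have "B*U + A*V = (\<Sum>i=0..a. \<Sum>j=Suc a..n. (e i * (real a - real i)) * e j + e i * (e j * (real j - real a)))"
      unfolding mult.commute[of B U] h1 h2 by (simp only: sum.distrib)
    also have "\<dots> = (\<Sum>i=0..a. \<Sum>j=Suc a..n. e i * e j * (real j - real i))"
      by (intro sum.cong refl) (simp add: algebra_simps)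
    finally have "B*U + A*V = (\<Sum>i=0..a. \<Sum>j=Suc a..n. e i * e j * (real j - real i))" .
    then show ?thesis by (simp only: sum_distrib_left) (intro sum.cong refl, simp add: algebra_simps)
  qed
  have bound: "\<bar>A*GR - B*GL\<bar> \<le> C * (B*U + A*V)"
  proof -
    have "\<bar>A*GR - B*GL\<bar> \<le> (\<Sum>i=0..a. \<bar>\<Sum>j=Suc a..n. e i * e j * (G j - G i)\<bar>)"
      unfolding prod by (rule sum_abs)
    also have "\<dots> \<le> (\<Sum>i=0..a. \<Sum>j=Suc a..n. e i * e j * (C * (real j - real i)))"
    proof (rule sum_mono)
      fix i assume i: "i \<in> {0..a}"
      have "\<bar>\<Sum>j=Suc a..n. e i * e j * (G j - G i)\<bar> \<le> (\<Sum>j=Suc a..n. \<bar>e i * e j * (G j - G i)\<bar>)"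
        by (rule sum_abs)
      also have "\<dots> \<le> (\<Sum>j=Suc a..n. e i * e j * (C * (real j - real i)))"
      proof (rule sum_mono)
        fix j assume j: "j \<in> {Suc a..n}"
        have "\<bar>G j - G i\<bar> \<le> C * \<bar>real j - real i\<bar>" using G[of j i] i j an by auto
        moreover have "\<bar>real j - real i\<bar> = real j - real i" using i j by auto
        ultimately show "\<bar>e i * e j * (G j - G i)\<bar> \<le> e i * e j * (C * (real j - real i))"
          using epos[of i] epos[of j] by (simp add: abs_mult mult_left_mono)
      qed
      finally show "\<bar>\<Sum>j=Suc a..n. e i * e j * (G j - G i)\<bar> \<le> (\<Sum>j=Suc a..n. e i * e j * (C * (real j - real i)))" .
    qed
    finally show ?thesis using KUV by simp
  qed
  have "\<bar>(\<Sum>j=0..n. cp \<beta> n (Suc a) b j * G j) - (\<Sum>j=0..n. cp \<beta> n a b j * G j)\<bar>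
      = (1-y)*\<bar>A*GR - B*GL\<bar>/((A+B)*(y*A+B))"
    unfolding T T' T'' diff using y0 yAB A0 B0 by (simp add: abs_mult abs_divide)
  also have "\<dots> \<le> (1-y)*(C * (B*U + A*V))/((A+B)*(y*A+B))"
    using bound y0 yAB A0 B0 by (intro divide_right_mono mult_left_mono) auto
  also have "\<dots> \<le> C/2"
  proof -
    have d0: "(A+B)*(y*A+B) > 0" using yAB A0 B0 by simp
    have "(1-y)*(C * (B*U + A*V)) * 2 \<le> C * ((A+B)*(y*A+B))"
      using mult_left_mono[OF core C] by (simp add: algebra_simps)
    then show ?thesis using d0 by (simp add: field_simps)
  qed
  finally show ?thesis .
qed

lemma omega_le: "\<eta> \<in> sos_Omega n \<Longrightarrow> \<eta> m \<le> n"
  unfolding sos_Omega_def by (cases "m \<in> {1..n}") auto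

lemma omega_upd: "\<eta> \<in> sos_Omega n \<Longrightarrow> k \<in> {1..n} \<Longrightarrow> j \<le> n \<Longrightarrow> \<eta>(k:=j) \<in> sos_Omega n"
  unfolding sos_Omega_def by auto

lemma omega_out: "\<eta> \<in> sos_Omega n \<Longrightarrow> m \<notin> {1..n} \<Longrightarrow> \<eta> m = 0"
  unfolding sos_Omega_def by auto

lemma finite_omega: "finite (sos_Omega n)"
proof -
  have "sos_Omega n \<subseteq> {f. \<forall>x. (x \<in> {1..n} \<longrightarrow> f x \<in> {0..n}) \<and> (x \<notin> {1..n} \<longrightarrow> f x = 0)}"
    unfolding sos_Omega_def by auto
  moreover have "finite {f. \<forall>x. (x \<in> {1..n} \<longrightarrow> f x \<in> {0..n}) \<and> (x \<notin> {1..n} \<longrightarrow> (f x::nat) = 0)}"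
    by (rule finite_set_of_finite_funs) auto
  ultimately show ?thesis by (rule finite_subset)
qed

lemma zero_in_omega: "(\<lambda>_. 0) \<in> sos_Omega n"
  unfolding sos_Omega_def by auto

lemma weight_pos: "sos_weight \<beta> n \<eta> > 0" by (simp add: sos_weight_def)

lemma Z_pos: "(\<Sum>\<zeta>\<in>sos_Omega n. sos_weight \<beta> n \<zeta>) > 0"
  using finite_omega zero_in_omega weight_pos by (intro sum_pos2[where i="\<lambda>_. 0"]) (auto intro: less_imp_le)

lemma mu_pos: "\<eta> \<in> sos_Omega n \<Longrightarrow> sos_mu \<beta> n \<eta> > 0"
  using Z_pos weight_pos by (simp add: sos_mu_def)

lemma mu_nonneg: "sos_mu \<beta> n \<eta> \<ge> 0"
  using mu_pos[where \<eta>=\<eta> and n=n and \<beta>=\<beta>] by (cases "\<eta> \<in> sos_Omega n") (auto simp: sos_mu_def)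

lemma mu_sum: "(\<Sum>\<eta>\<in>sos_Omega n. sos_mu \<beta> n \<eta>) = 1"
  using Z_pos[where n=n and \<beta>=\<beta>] by (simp add: sos_mu_def sum_divide_distrib[symmetric])

lemma energy_split:
  fixes \<zeta> :: "nat \<Rightarrow> nat"
  assumes i: "i \<in> {1..n}"
  shows "(\<Sum>m=1..n+1. \<bar>real ((\<zeta>(i:=j)) (m - 1)) - real ((\<zeta>(i:=j)) m)\<bar>)
    = (\<Sum>m\<in>{1..n+1} - {i, i+1}. \<bar>real (\<zeta> (m - 1)) - real (\<zeta> m)\<bar>)
      + (\<bar>real (\<zeta> (i-1)) - real j\<bar> + \<bar>real j - real (\<zeta> (i+1))\<bar>)"
proof -
  let ?f = "\<lambda>m. \<bar>real ((\<zeta>(i:=j)) (m - 1)) - real ((\<zeta>(i:=j)) m)\<bar>"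
  have "(\<Sum>m=1..n+1. ?f m) = ?f i + (\<Sum>m\<in>{1..n+1} - {i}. ?f m)"
    using i by (intro sum.remove) auto
  also have "(\<Sum>m\<in>{1..n+1} - {i}. ?f m) = ?f (i+1) + (\<Sum>m\<in>{1..n+1} - {i} - {i+1}. ?f m)"
    using i by (intro sum.remove) auto
  also have "{1..n+1} - {i} - {i+1} = {1..n+1} - {i, i+1}" by auto
  also have "(\<Sum>m\<in>{1..n+1} - {i, i+1}. ?f m) = (\<Sum>m\<in>{1..n+1} - {i, i+1}. \<bar>real (\<zeta> (m - 1)) - real (\<zeta> m)\<bar>)"
    by (rule sum.cong) auto
  also have "?f i = \<bar>real (\<zeta> (i-1)) - real j\<bar>" using i by auto
  also have "?f (i+1) = \<bar>real j - real (\<zeta> (i+1))\<bar>" by simp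
  finally show ?thesis by simp
qed

lemma weight_split:
  fixes \<zeta> :: "nat \<Rightarrow> nat"
  assumes i: "i \<in> {1..n}"
  shows "sos_weight \<beta> n (\<zeta>(i:=j)) = exp (-\<beta> * (\<Sum>m\<in>{1..n+1} - {i, i+1}. \<bar>real (\<zeta> (m - 1)) - real (\<zeta> m)\<bar>))
     * cw \<beta> (\<zeta> (i-1)) (\<zeta> (i+1)) j"
  unfolding sos_weight_def energy_split[OF i] cw_def by (simp add: algebra_simps flip: exp_add)

lemma cond_eq:
  assumes z: "\<zeta> \<in> sos_Omega n" and i: "i \<in> {1..n}" and j: "j \<le> n"
  shows "sos_mu \<beta> n (\<zeta>(i:=j)) / (\<Sum>k=0..n. sos_mu \<beta> n (\<zeta>(i:=k))) = cp \<beta> n (\<zeta> (i-1)) (\<zeta> (i+1)) j"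
proof -
  define E where "E = exp (-\<beta> * (\<Sum>m\<in>{1..n+1} - {i, i+1}. \<bar>real (\<zeta> (m - 1)) - real (\<zeta> m)\<bar>))"
  define Z where "Z = (\<Sum>\<zeta>\<in>sos_Omega n. sos_weight \<beta> n \<zeta>)"
  have E0: "E > 0" and Z0: "Z > 0" using Z_pos by (simp_all add: E_def Z_def)
  have mu: "\<And>k. k \<le> n \<Longrightarrow> sos_mu \<beta> n (\<zeta>(i:=k)) = E * cw \<beta> (\<zeta> (i-1)) (\<zeta> (i+1)) k / Z"
    using omega_upd[OF z i] weight_split[OF i] unfolding sos_mu_def E_def Z_def by auto
  have "(\<Sum>k=0..n. sos_mu \<beta> n (\<zeta>(i:=k))) = (\<Sum>k=0..n. E * cw \<beta> (\<zeta> (i-1)) (\<zeta> (i+1)) k / Z)"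
    by (rule sum.cong) (auto simp: mu)
  also have "\<dots> = E / Z * (\<Sum>k=0..n. cw \<beta> (\<zeta> (i-1)) (\<zeta> (i+1)) k)"
    by (simp add: sum_distrib_left sum_divide_distrib)
  finally show ?thesis using E0 Z0 j unfolding cp_def by (simp add: mu)
qed

lemma sum_delta_mult:
  fixes f :: "'a \<Rightarrow> real"
  assumes "finite S" "x \<in> S"
  shows "(\<Sum>\<eta>\<in>S. (if \<eta> = x then c else 0) * f \<eta>) = c * f x"
proof -
  have "(\<Sum>\<eta>\<in>S. (if \<eta> = x then c else 0) * f \<eta>) = (\<Sum>\<eta>\<in>S. if \<eta> = x then c * f \<eta> else 0)"
    by (rule sum.cong) auto
  also have "\<dots> = c * f x" using assms by (simp add: sum.delta')
  finally show ?thesis .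
qed

definition Pop :: "real \<Rightarrow> nat \<Rightarrow> ((nat\<Rightarrow>nat)\<Rightarrow>real) \<Rightarrow> (nat\<Rightarrow>nat) \<Rightarrow> real" where
  "Pop \<beta> n g \<zeta> = (1/real n) * (\<Sum>i=1..n. \<Sum>j=0..n. cp \<beta> n (\<zeta> (i-1)) (\<zeta> (i+1)) j * g (\<zeta>(i:=j)))"

lemma P_eq:
  assumes z: "\<zeta> \<in> sos_Omega n"
  shows "(\<Sum>\<eta>\<in>sos_Omega n. col_P \<beta> n \<zeta> \<eta> * g \<eta>) = Pop \<beta> n g \<zeta>"
proof -
  define q where "q i j = sos_mu \<beta> n (\<zeta>(i := j)) / (\<Sum>k=0..n. sos_mu \<beta> n (\<zeta>(i := k)))" for i j
  have "(\<Sum>\<eta>\<in>sos_Omega n. col_P \<beta> n \<zeta> \<eta> * g \<eta>)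
     = (\<Sum>\<eta>\<in>sos_Omega n. \<Sum>i=1..n. (1/real n) * (\<Sum>j=0..n. (if \<eta> = \<zeta>(i:=j) then q i j else 0) * g \<eta>))"
    unfolding col_P_def q_def by (simp add: sum_distrib_right)
  also have "\<dots> = (\<Sum>i=1..n. (1/real n) * (\<Sum>j=0..n. \<Sum>\<eta>\<in>sos_Omega n. (if \<eta> = \<zeta>(i:=j) then q i j else 0) * g \<eta>))"
    unfolding sum_distrib_left by (subst sum.swap, rule sum.cong[OF refl], rule sum.swap)
  also have "\<dots> = (\<Sum>i=1..n. (1/real n) * (\<Sum>j=0..n. q i j * g (\<zeta>(i:=j))))"
    using omega_upd[OF z] finite_omega by (intro sum.cong refl arg_cong2[where f="(*)"] sum_delta_mult) auto
  also have "\<dots> = Pop \<beta> n g \<zeta>"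
    unfolding Pop_def sum_distrib_left[symmetric]
    by (intro arg_cong2[where f="(*)"] sum.cong refl) (auto simp: q_def cond_eq[OF z])
  finally show ?thesis .
qed

lemma law_op:
  assumes "\<xi> \<in> sos_Omega n"
  shows "(\<Sum>\<eta>\<in>sos_Omega n. col_law \<beta> n t \<xi> \<eta> * g \<eta>) = (Pop \<beta> n ^^ t) g \<xi>"
proof (induction t arbitrary: g)
  case 0
  have "(\<Sum>\<eta>\<in>sos_Omega n. col_law \<beta> n 0 \<xi> \<eta> * g \<eta>) = (\<Sum>\<eta>\<in>sos_Omega n. (if \<eta> = \<xi> then 1 else 0) * g \<eta>)"
    by (simp only: col_law.simps)
  also have "\<dots> = 1 * g \<xi>" by (rule sum_delta_mult[OF finite_omega assms])
  finally show ?case by simp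
next
  case (Suc t)
  have "(\<Sum>\<eta>\<in>sos_Omega n. col_law \<beta> n (Suc t) \<xi> \<eta> * g \<eta>)
      = (\<Sum>\<eta>\<in>sos_Omega n. \<Sum>\<zeta>\<in>sos_Omega n. col_law \<beta> n t \<xi> \<zeta> * (col_P \<beta> n \<zeta> \<eta> * g \<eta>))"
    unfolding col_law.simps(2) sum_distrib_right by (simp only: mult.assoc)
  also have "\<dots> = (\<Sum>\<zeta>\<in>sos_Omega n. col_law \<beta> n t \<xi> \<zeta> * (\<Sum>\<eta>\<in>sos_Omega n. col_P \<beta> n \<zeta> \<eta> * g \<eta>))"
    unfolding sum_distrib_left by (rule sum.swap)
  also have "\<dots> = (\<Sum>\<zeta>\<in>sos_Omega n. col_law \<beta> n t \<xi> \<zeta> * Pop \<beta> n g \<zeta>)"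
    by (intro sum.cong refl) (simp add: P_eq)
  also have "\<dots> = (Pop \<beta> n ^^ t) (Pop \<beta> n g) \<xi>" by (rule Suc)
  also have "\<dots> = (Pop \<beta> n ^^ Suc t) g \<xi>" by (simp only: funpow_Suc_right o_apply)
  finally show ?case .
qed

lemma stat_i:
  assumes i: "i \<in> {1..n}"
  shows "(\<Sum>\<zeta>\<in>sos_Omega n. sos_mu \<beta> n \<zeta> * (\<Sum>j=0..n.
      sos_mu \<beta> n (\<zeta>(i := j)) / (\<Sum>k=0..n. sos_mu \<beta> n (\<zeta>(i := k))) * g (\<zeta>(i:=j))))
    = (\<Sum>\<zeta>\<in>sos_Omega n. sos_mu \<beta> n \<zeta> * g \<zeta>)"
proof -
  let ?\<Omega> = "sos_Omega n"
  let ?m = "sos_mu \<beta> n"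
  define T where "T \<zeta> = (\<Sum>k=0..n. ?m (\<zeta>(i := k)))" for \<zeta> :: "nat \<Rightarrow> nat"
  define F where "F p = ?m (fst p) * (?m ((fst p)(i := snd p)) / T (fst p)) * g ((fst p)(i := snd p))" for p
  define \<phi> where "\<phi> p = ((fst p)(i := snd p), fst p i)" for p :: "(nat \<Rightarrow> nat) \<times> nat"
  have Tupd: "\<And>\<zeta> j. T (\<zeta>(i:=j)) = T \<zeta>" by (simp add: T_def)
  have Tpos: "\<And>\<zeta>. \<zeta> \<in> ?\<Omega> \<Longrightarrow> T \<zeta> > 0"
  proof -
    fix \<zeta> assume z: "\<zeta> \<in> ?\<Omega>"
    have "?m (\<zeta>(i := \<zeta> i)) > 0" using z mu_pos by simp
    moreover have "\<zeta> i \<in> {0..n}" using omega_le[OF z] by simp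
    ultimately show "T \<zeta> > 0" unfolding T_def
      by (intro sum_pos2[where i="\<zeta> i"]) (auto simp: mu_nonneg)
  qed
  have "(\<Sum>\<zeta>\<in>?\<Omega>. ?m \<zeta> * (\<Sum>j=0..n. ?m (\<zeta>(i := j)) / T \<zeta> * g (\<zeta>(i:=j))))
      = (\<Sum>\<zeta>\<in>?\<Omega>. \<Sum>j\<in>{0..n}. F (\<zeta>, j))"
    by (simp add: F_def sum_distrib_left mult.assoc)
  also have "\<dots> = (\<Sum>p\<in>?\<Omega> \<times> {0..n}. F p)" unfolding sum.cartesian_product by simp
  also have "\<dots> = (\<Sum>p\<in>?\<Omega> \<times> {0..n}. F (\<phi> p))"
  proof (rule sum.reindex_bij_witness[where i=\<phi> and j=\<phi>])
  qed (auto simp: \<phi>_def intro: omega_upd[OF _ i] dest: omega_le)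
  also have "\<dots> = (\<Sum>\<zeta>\<in>?\<Omega>. \<Sum>j\<in>{0..n}. F (\<phi> (\<zeta>, j)))" unfolding sum.cartesian_product by simp
  also have "\<dots> = (\<Sum>\<zeta>\<in>?\<Omega>. ?m \<zeta> * g \<zeta>)"
  proof (rule sum.cong[OF refl])
    fix \<zeta> assume z: "\<zeta> \<in> ?\<Omega>"
    have "(\<Sum>j\<in>{0..n}. F (\<phi> (\<zeta>, j))) = (\<Sum>j\<in>{0..n}. ?m (\<zeta>(i:=j)) * (?m \<zeta> / T \<zeta> * g \<zeta>))"
      by (intro sum.cong refl) (simp add: F_def \<phi>_def Tupd algebra_simps)
    also have "\<dots> = T \<zeta> * (?m \<zeta> / T \<zeta> * g \<zeta>)" by (simp only: T_def sum_distrib_right)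
    also have "\<dots> = ?m \<zeta> * g \<zeta>" using Tpos[OF z] by simp
    finally show "(\<Sum>j\<in>{0..n}. F (\<phi> (\<zeta>, j))) = ?m \<zeta> * g \<zeta>" .
  qed
  finally show ?thesis by (simp add: T_def)
qed

lemma stationary:
  assumes n: "n \<ge> 1"
  shows "(\<Sum>\<zeta>\<in>sos_Omega n. sos_mu \<beta> n \<zeta> * Pop \<beta> n g \<zeta>) = (\<Sum>\<zeta>\<in>sos_Omega n. sos_mu \<beta> n \<zeta> * g \<zeta>)"
proof -
  let ?m = "sos_mu \<beta> n"
  define X where "X i \<zeta> = (\<Sum>j=0..n. ?m (\<zeta>(i := j)) / (\<Sum>k=0..n. ?m (\<zeta>(i := k))) * g (\<zeta>(i:=j)))" for i \<zeta>
  have P: "\<And>\<zeta>. \<zeta> \<in> sos_Omega n \<Longrightarrow> Pop \<beta> n g \<zeta> = (1/real n) * (\<Sum>i=1..n. X i \<zeta>)"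
    unfolding Pop_def X_def by (intro arg_cong2[where f="(*)"] sum.cong refl) (auto simp: cond_eq)
  have "(\<Sum>\<zeta>\<in>sos_Omega n. ?m \<zeta> * Pop \<beta> n g \<zeta>) = (\<Sum>\<zeta>\<in>sos_Omega n. (1/real n) * (\<Sum>i=1..n. ?m \<zeta> * X i \<zeta>))"
    by (intro sum.cong refl) (simp add: P sum_distrib_left)
  also have "\<dots> = (1/real n) * (\<Sum>\<zeta>\<in>sos_Omega n. \<Sum>i=1..n. ?m \<zeta> * X i \<zeta>)"
    by (simp only: sum_distrib_left[symmetric])
  also have "\<dots> = (1/real n) * (\<Sum>i=1..n. \<Sum>\<zeta>\<in>sos_Omega n. ?m \<zeta> * X i \<zeta>)"
    by (subst sum.swap) (rule refl)
  also have "\<dots> = (1/real n) * (\<Sum>i=1..n. \<Sum>\<zeta>\<in>sos_Omega n. ?m \<zeta> * g \<zeta>)"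
  proof -
    have "\<And>i. i \<in> {1..n} \<Longrightarrow> (\<Sum>\<zeta>\<in>sos_Omega n. ?m \<zeta> * X i \<zeta>) = (\<Sum>\<zeta>\<in>sos_Omega n. ?m \<zeta> * g \<zeta>)"
      unfolding X_def by (rule stat_i)
    then show ?thesis by simp
  qed
  also have "\<dots> = (\<Sum>\<zeta>\<in>sos_Omega n. ?m \<zeta> * g \<zeta>)" using n by simp
  finally show ?thesis .
qed

lemma stationary_iter:
  assumes n: "n \<ge> 1"
  shows "(\<Sum>\<zeta>\<in>sos_Omega n. sos_mu \<beta> n \<zeta> * (Pop \<beta> n ^^ t) g \<zeta>) = (\<Sum>\<zeta>\<in>sos_Omega n. sos_mu \<beta> n \<zeta> * g \<zeta>)"
proof (induction t)
  case (Suc t)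
  have "(\<Sum>\<zeta>\<in>sos_Omega n. sos_mu \<beta> n \<zeta> * (Pop \<beta> n ^^ Suc t) g \<zeta>)
     = (\<Sum>\<zeta>\<in>sos_Omega n. sos_mu \<beta> n \<zeta> * Pop \<beta> n ((Pop \<beta> n ^^ t) g) \<zeta>)" by simp
  also have "\<dots> = (\<Sum>\<zeta>\<in>sos_Omega n. sos_mu \<beta> n \<zeta> * (Pop \<beta> n ^^ t) g \<zeta>)" by (rule stationary[OF n])
  finally show ?case using Suc by simp
qed simp

definition wt :: "nat \<Rightarrow> nat \<Rightarrow> real" where
  "wt n k = real k * (real n + 1 - real k)"

definition dd :: "nat \<Rightarrow> (nat \<Rightarrow> nat) \<Rightarrow> (nat \<Rightarrow> nat) \<Rightarrow> real" where
  "dd n \<eta> \<eta>' = (\<Sum>k=1..n. wt n k * \<bar>real (\<eta> k) - real (\<eta>' k)\<bar>)"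

definition LipP :: "nat \<Rightarrow> real \<Rightarrow> ((nat \<Rightarrow> nat) \<Rightarrow> real) \<Rightarrow> bool" where
  "LipP n L f = (\<forall>\<eta>\<in>sos_Omega n. \<forall>\<eta>'\<in>sos_Omega n. \<bar>f \<eta> - f \<eta>'\<bar> \<le> L * dd n \<eta> \<eta>')"

lemma wt_nonneg: "k \<le> n + 1 \<Longrightarrow> wt n k \<ge> 0"
  unfolding wt_def by (intro mult_nonneg_nonneg) auto

lemma wt_ge: "k \<in> {1..n} \<Longrightarrow> wt n k \<ge> real n"
proof -
  assume k: "k \<in> {1..n}"
  have "wt n k - real n = (real k - 1) * (real n - real k)" unfolding wt_def by (simp add: algebra_simps)
  also have "\<dots> \<ge> 0" using k by (intro mult_nonneg_nonneg) auto
  finally show ?thesis by simp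
qed

lemma wt_le: "k \<in> {1..n} \<Longrightarrow> wt n k \<le> real n ^ 2"
proof -
  assume k: "k \<in> {1..n}"
  have "wt n k \<le> real n * real n" unfolding wt_def using k
    by (intro mult_mono) auto
  then show ?thesis by (simp add: power2_eq_square)
qed

lemma dd_nonneg: "dd n \<eta> \<eta>' \<ge> 0"
  unfolding dd_def by (intro sum_nonneg mult_nonneg_nonneg wt_nonneg) auto

lemma dd_upd:
  assumes m: "m \<in> {1..n}"
  shows "dd n \<eta> (\<eta>(m:=v)) = wt n m * \<bar>real (\<eta> m) - real v\<bar>"
proof -
  have "dd n \<eta> (\<eta>(m:=v)) = (\<Sum>k=1..n. if k = m then wt n m * \<bar>real (\<eta> m) - real v\<bar> else 0)"
    unfolding dd_def by (rule sum.cong) auto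
  then show ?thesis using m by simp
qed

lemma dd_step:
  assumes i: "i \<in> {1..n}" and st: "\<bar>real (\<eta> i) - real (\<eta>' i)\<bar> = \<bar>real v - real (\<eta>' i)\<bar> + 1"
  shows "dd n \<eta> \<eta>' = dd n (\<eta>(i:=v)) \<eta>' + wt n i"
proof -
  have "dd n \<eta> \<eta>' = (\<Sum>k=1..n. wt n k * \<bar>real ((\<eta>(i:=v)) k) - real (\<eta>' k)\<bar> + (if k = i then wt n i else 0))"
    unfolding dd_def by (rule sum.cong) (auto simp: st algebra_simps)
  also have "\<dots> = dd n (\<eta>(i:=v)) \<eta>' + wt n i" using i by (simp add: sum.distrib dd_def)
  finally show ?thesis .
qed

definition dn :: "nat \<Rightarrow> (nat \<Rightarrow> nat) \<Rightarrow> (nat \<Rightarrow> nat) \<Rightarrow> nat" where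
  "dn n \<eta> \<eta>' = (\<Sum>k=1..n. (\<eta> k - \<eta>' k) + (\<eta>' k - \<eta> k))"

lemma dn_step:
  assumes i: "i \<in> {1..n}" and st: "(\<eta> i - \<eta>' i) + (\<eta>' i - \<eta> i) = (v - \<eta>' i) + (\<eta>' i - v) + 1"
  shows "dn n \<eta> \<eta>' = dn n (\<eta>(i:=v)) \<eta>' + 1"
proof -
  have "dn n \<eta> \<eta>' = (\<Sum>k=1..n. ((\<eta>(i:=v)) k - \<eta>' k) + (\<eta>' k - (\<eta>(i:=v)) k) + (if k = i then 1 else 0))"
    unfolding dn_def by (rule sum.cong) (auto simp: st)
  also have "\<dots> = dn n (\<eta>(i:=v)) \<eta>' + 1" using i by (simp add: sum.distrib dn_def)
  finally show ?thesis .
qed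

lemma dn_zero:
  assumes "\<eta> \<in> sos_Omega n" "\<eta>' \<in> sos_Omega n" "dn n \<eta> \<eta>' = 0"
  shows "\<eta> = \<eta>'"
proof
  fix k
  show "\<eta> k = \<eta>' k"
  proof (cases "k \<in> {1..n}")
    case True
    then have "(\<eta> k - \<eta>' k) + (\<eta>' k - \<eta> k) = 0" using assms(3) unfolding dn_def by simp
    then show ?thesis by simp
  next
    case False
    then show ?thesis using omega_out assms(1,2) by metis
  qed
qed

lemma path_lip:
  assumes L: "L \<ge> 0"
    and adj: "\<And>\<zeta> i. \<zeta> \<in> sos_Omega n \<Longrightarrow> i \<in> {1..n} \<Longrightarrow> \<zeta> i < n \<Longrightarrow> \<bar>f \<zeta> - f (\<zeta>(i := \<zeta> i + 1))\<bar> \<le> L * wt n i"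
  shows "LipP n L f"
proof -
  have main: "\<And>\<eta> \<eta>'. \<eta> \<in> sos_Omega n \<Longrightarrow> \<eta>' \<in> sos_Omega n \<Longrightarrow> dn n \<eta> \<eta>' = D \<Longrightarrow> \<bar>f \<eta> - f \<eta>'\<bar> \<le> L * dd n \<eta> \<eta>'" for D
  proof (induction D rule: less_induct)
    case (less D)
    fix \<eta> \<eta>' assume e: "\<eta> \<in> sos_Omega n" and e': "\<eta>' \<in> sos_Omega n" and D: "dn n \<eta> \<eta>' = D"
    show "\<bar>f \<eta> - f \<eta>'\<bar> \<le> L * dd n \<eta> \<eta>'"
    proof (cases "\<eta> = \<eta>'")
      case True then show ?thesis using L dd_nonneg by simp
    next
      case False
      then obtain i where i: "i \<in> {1..n}" and ne: "\<eta> i \<noteq> \<eta>' i"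
        using dn_zero[OF e e'] unfolding dn_def by fastforce
      show ?thesis
      proof (cases "\<eta> i < \<eta>' i")
        case True
        define \<zeta> where "\<zeta> = \<eta>(i := \<eta> i + 1)"
        have le: "\<eta>' i \<le> n" using omega_le[OF e'] .
        have z: "\<zeta> \<in> sos_Omega n" unfolding \<zeta>_def using e i True le by (intro omega_upd) auto
        have d1: "dn n \<eta> \<eta>' = dn n \<zeta> \<eta>' + 1" unfolding \<zeta>_def using True by (intro dn_step[OF i]) auto
        have d2: "dd n \<eta> \<eta>' = dd n \<zeta> \<eta>' + wt n i" unfolding \<zeta>_def using True by (intro dd_step[OF i]) auto
        have "\<bar>f \<zeta> - f \<eta>'\<bar> \<le> L * dd n \<zeta> \<eta>'" using less.IH[of "dn n \<zeta> \<eta>'"] d1 D z e' by auto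
        moreover have "\<bar>f \<eta> - f \<zeta>\<bar> \<le> L * wt n i" using adj[OF e i] True le unfolding \<zeta>_def by auto
        ultimately show ?thesis using d2 by (simp add: algebra_simps)
      next
        case False
        with ne have gt: "\<eta>' i < \<eta> i" by simp
        define \<zeta> where "\<zeta> = \<eta>(i := \<eta> i - 1)"
        have le: "\<eta> i \<le> n" using omega_le[OF e] .
        have z: "\<zeta> \<in> sos_Omega n" unfolding \<zeta>_def using e i le by (intro omega_upd) auto
        have d1: "dn n \<eta> \<eta>' = dn n \<zeta> \<eta>' + 1" unfolding \<zeta>_def using gt by (intro dn_step[OF i]) auto
        have d2: "dd n \<eta> \<eta>' = dd n \<zeta> \<eta>' + wt n i" unfolding \<zeta>_def using gt by (intro dd_step[OF i]) (auto simp: of_nat_diff)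
        have "\<bar>f \<zeta> - f \<eta>'\<bar> \<le> L * dd n \<zeta> \<eta>'" using less.IH[of "dn n \<zeta> \<eta>'"] d1 D z e' by auto
        moreover have "\<zeta>(i := \<zeta> i + 1) = \<eta>" unfolding \<zeta>_def using gt by auto
        moreover have "\<zeta> i < n" unfolding \<zeta>_def using gt le by auto
        ultimately have "\<bar>f \<zeta> - f \<eta>'\<bar> \<le> L * dd n \<zeta> \<eta>'" "\<bar>f \<zeta> - f \<eta>\<bar> \<le> L * wt n i"
          using adj[OF z i] by auto
        then show ?thesis using d2 by (simp add: algebra_simps)
      qed
    qed
  qed
  show ?thesis unfolding LipP_def using main by blast
qed

lemma cp_nonneg: "cp \<beta> n a b j \<ge> 0"
  unfolding cp_def using cw_pos by (intro divide_nonneg_nonneg sum_nonneg) (auto intro: less_imp_le)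

lemma cp_sum: "(\<Sum>j=0..n. cp \<beta> n a b j) = 1"
proof -
  have "(\<Sum>k=0..n. cw \<beta> a b k) > 0" using cw_pos by (intro sum_pos) auto
  then show ?thesis unfolding cp_def by (simp add: sum_divide_distrib[symmetric])
qed

lemma cw_sym: "cw \<beta> a b = cw \<beta> b a"
  unfolding cw_def by (auto simp: abs_minus_commute add.commute)

lemma cp_sym: "cp \<beta> n a b = cp \<beta> n b a"
  unfolding cp_def cw_sym[of \<beta> a b] ..

lemma Pop_S: "Pop \<beta> n g \<xi> = (1/real n) * (\<Sum>k=1..n. \<Sum>j=0..n. cp \<beta> n (\<xi> (k-1)) (\<xi> (k+1)) j * g (\<xi>(k:=j)))"
  by (simp add: Pop_def)

lemma avg_bound:
  fixes g :: "nat \<Rightarrow> real" and L :: real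
  assumes L: "L \<ge> 0" and b: "\<And>j. j \<le> n \<Longrightarrow> \<bar>g j\<bar> \<le> L"
  shows "\<bar>\<Sum>j=0..n. cp \<beta> n a c j * g j\<bar> \<le> L"
proof -
  have "\<bar>\<Sum>j=0..n. cp \<beta> n a c j * g j\<bar> \<le> (\<Sum>j=0..n. \<bar>cp \<beta> n a c j * g j\<bar>)" by (rule sum_abs)
  also have "\<dots> \<le> (\<Sum>j=0..n. cp \<beta> n a c j * L)"
    by (intro sum_mono) (auto simp: abs_mult cp_nonneg intro: mult_left_mono b)
  also have "\<dots> = L" by (simp add: sum_distrib_right[symmetric] cp_sum)
  finally show ?thesis .
qed

lemma contract_adj:
  assumes \<beta>: "\<beta> > 0" and L: "L \<ge> 0" and Lg: "LipP n L g"
    and z: "\<zeta> \<in> sos_Omega n" and i: "i \<in> {1..n}" and zi: "\<zeta> i < n"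
  shows "\<bar>Pop \<beta> n g \<zeta> - Pop \<beta> n g (\<zeta>(i := \<zeta> i + 1))\<bar> \<le> L * (wt n i - 1/real n)"
proof -
  define \<zeta>' where "\<zeta>' = \<zeta>(i := \<zeta> i + 1)"
  have z': "\<zeta>' \<in> sos_Omega n" unfolding \<zeta>'_def using z i zi by (intro omega_upd) auto
  have n1: "n \<ge> 1" using i by simp
  define S where "S \<xi> k = (\<Sum>j=0..n. cp \<beta> n (\<xi> (k-1)) (\<xi> (k+1)) j * g (\<xi>(k:=j)))" for \<xi> k
  define bnd where "bnd k = L * wt n i - (if k = i then L * wt n i else 0) + (if k = i+1 then L * wt n (i+1)/2 else 0)
      + (if k = i - 1 then L * wt n (i-1)/2 else 0)" for k
  have wti: "wt n i \<ge> 0" "wt n (i+1) \<ge> 0" "wt n (i-1) \<ge> 0" using i by (auto intro: wt_nonneg)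
  have Lip: "\<And>\<eta> \<eta>'. \<eta> \<in> sos_Omega n \<Longrightarrow> \<eta>' \<in> sos_Omega n \<Longrightarrow> \<bar>g \<eta> - g \<eta>'\<bar> \<le> L * dd n \<eta> \<eta>'"
    using Lg unfolding LipP_def by blast
  have Sk: "\<bar>S \<zeta> k - S \<zeta>' k\<bar> \<le> bnd k" if k: "k \<in> {1..n}" for k
  proof (cases "k = i")
    case True
    have "S \<zeta> k = S \<zeta>' k" unfolding S_def \<zeta>'_def using True i by (intro sum.cong) auto
    moreover have "bnd k = 0" unfolding bnd_def using True i by auto
    ultimately show ?thesis by simp
  next
    case False
    define c1 where "c1 = cp \<beta> n (\<zeta> (k-1)) (\<zeta> (k+1))"
    define c2 where "c2 = cp \<beta> n (\<zeta>' (k-1)) (\<zeta>' (k+1))"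
    define G where "G j = g (\<zeta>'(k:=j))" for j
    have split: "S \<zeta> k - S \<zeta>' k = (\<Sum>j=0..n. c1 j * (g (\<zeta>(k:=j)) - G j))
        + ((\<Sum>j=0..n. c1 j * G j) - (\<Sum>j=0..n. c2 j * G j))"
      unfolding S_def c1_def c2_def G_def by (simp add: algebra_simps sum_subtractf sum.distrib)
    have p1: "\<bar>\<Sum>j=0..n. c1 j * (g (\<zeta>(k:=j)) - G j)\<bar> \<le> L * wt n i"
      unfolding c1_def
    proof (rule avg_bound)
      show "0 \<le> L * wt n i" using L wti by simp
      fix j assume j: "j \<le> n"
      have m1: "\<zeta>(k:=j) \<in> sos_Omega n" using z k j by (rule omega_upd)
      have eq: "\<zeta>'(k:=j) = (\<zeta>(k:=j))(i := (\<zeta>(k:=j)) i + 1)" unfolding \<zeta>'_def using False by (auto simp: fun_upd_twist)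
      have m2: "\<zeta>'(k:=j) \<in> sos_Omega n" using z' k j by (rule omega_upd)
      have "\<bar>g (\<zeta>(k:=j)) - G j\<bar> \<le> L * dd n (\<zeta>(k:=j)) (\<zeta>'(k:=j))" unfolding G_def using Lip m1 m2 by blast
      also have "dd n (\<zeta>(k:=j)) (\<zeta>'(k:=j)) = wt n i" unfolding eq by (subst dd_upd[OF i]) simp
      finally show "\<bar>g (\<zeta>(k:=j)) - G j\<bar> \<le> L * wt n i" .
    qed
    have GL: "\<bar>G j - G j'\<bar> \<le> (L * wt n k) * \<bar>real j - real j'\<bar>" if "j \<le> n" "j' \<le> n" for j j'
    proof -
      have m1: "\<zeta>'(k:=j) \<in> sos_Omega n" "\<zeta>'(k:=j') \<in> sos_Omega n" using z' k that by (auto intro: omega_upd)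
      have "\<bar>G j - G j'\<bar> \<le> L * dd n (\<zeta>'(k:=j)) (\<zeta>'(k:=j'))" unfolding G_def using Lip m1 by blast
      also have "dd n (\<zeta>'(k:=j)) (\<zeta>'(k:=j')) = wt n k * \<bar>real j - real j'\<bar>"
        using dd_upd[OF k, of "\<zeta>'(k:=j)" j'] by simp
      finally show ?thesis by (simp add: mult.assoc)
    qed
    have Ck: "L * wt n k \<ge> 0" using L k wt_nonneg[of k n] by (auto intro: mult_nonneg_nonneg)
    have p2: "\<bar>(\<Sum>j=0..n. c1 j * G j) - (\<Sum>j=0..n. c2 j * G j)\<bar>
        \<le> (if k = i+1 then L * wt n (i+1)/2 else 0) + (if k = i - 1 then L * wt n (i-1)/2 else 0)"
    proof (cases "k = i + 1")
      case True
      have a: "\<zeta> (k-1) < n" "\<zeta> (k+1) \<le> n" using True zi omega_le[OF z] by auto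
      have "c1 = cp \<beta> n (\<zeta> i) (\<zeta> (k+1))" "c2 = cp \<beta> n (Suc (\<zeta> i)) (\<zeta> (k+1))"
        unfolding c1_def c2_def \<zeta>'_def using True by auto
      then have "\<bar>(\<Sum>j=0..n. c1 j * G j) - (\<Sum>j=0..n. c2 j * G j)\<bar> \<le> L * wt n k / 2"
        using oneD[OF \<beta> _ a(2) Ck GL] zi by (simp add: abs_minus_commute)
      then show ?thesis using True i by auto
    next
      case F2: False
      show ?thesis
      proof (cases "k = i - 1")
        case True
        then have ki: "k + 1 = i" "k - 1 \<noteq> i" using i k by auto
        have a: "\<zeta> (k-1) \<le> n" using omega_le[OF z] by auto
        have e1: "\<zeta>' (k-1) = \<zeta> (k-1)" "\<zeta>' (k+1) = Suc (\<zeta> i)" unfolding \<zeta>'_def using ki by auto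
        have "c1 = cp \<beta> n (\<zeta> (k-1)) (\<zeta> i)" unfolding c1_def using ki(1) by simp
        moreover have "c2 = cp \<beta> n (\<zeta> (k-1)) (Suc (\<zeta> i))" unfolding c2_def e1 ..
        ultimately have "c1 = cp \<beta> n (\<zeta> i) (\<zeta> (k-1))" "c2 = cp \<beta> n (Suc (\<zeta> i)) (\<zeta> (k-1))"
          by (simp_all add: cp_sym)
        then have "\<bar>(\<Sum>j=0..n. c1 j * G j) - (\<Sum>j=0..n. c2 j * G j)\<bar> \<le> L * wt n k / 2"
          using oneD[OF \<beta> zi a Ck GL] by (simp add: abs_minus_commute)
        then show ?thesis using True F2 by auto
      next
        case False
        then have k1: "k + 1 \<noteq> i" using i k by auto
        have k2: "k - 1 \<noteq> i" using F2 k by auto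
        have "\<zeta>' (k-1) = \<zeta> (k-1)" "\<zeta>' (k+1) = \<zeta> (k+1)" unfolding \<zeta>'_def using k1 k2 by auto
        then have "c1 = c2" unfolding c1_def c2_def by simp
        then show ?thesis using False F2 by simp
      qed
    qed
    have "\<bar>S \<zeta> k - S \<zeta>' k\<bar> \<le> L * wt n i + ((if k = i+1 then L * wt n (i+1)/2 else 0) + (if k = i - 1 then L * wt n (i-1)/2 else 0))"
      unfolding split by (rule order_trans[OF abs_triangle_ineq add_mono[OF p1 p2]])
    then show ?thesis unfolding bnd_def using False by simp
  qed
  have diff: "Pop \<beta> n g \<zeta> - Pop \<beta> n g \<zeta>' = (1/real n) * (\<Sum>k=1..n. S \<zeta> k - S \<zeta>' k)"
    unfolding Pop_S S_def by (simp add: sum_subtractf right_diff_distrib)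
  have "\<bar>Pop \<beta> n g \<zeta> - Pop \<beta> n g \<zeta>'\<bar> \<le> (1/real n) * (\<Sum>k=1..n. bnd k)"
  proof -
    have "\<bar>\<Sum>k=1..n. S \<zeta> k - S \<zeta>' k\<bar> \<le> (\<Sum>k=1..n. bnd k)"
      by (rule order_trans[OF sum_abs sum_mono]) (use Sk in auto)
    then show ?thesis unfolding diff using n1 by (simp add: abs_mult divide_right_mono)
  qed
  also have "(\<Sum>k=1..n. bnd k) \<le> real n * (L * wt n i) - L * wt n i + L * wt n (i+1)/2 + L * wt n (i-1)/2"
  proof -
    have "(\<Sum>k=1..n. bnd k) = real n * (L * wt n i) - L * wt n i
        + (if i+1 \<in> {1..n} then L * wt n (i+1)/2 else 0) + (if i - 1 \<in> {1..n} then L * wt n (i-1)/2 else 0)"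
      unfolding bnd_def using i by (simp add: sum.distrib sum_subtractf)
    then show ?thesis using L wti by auto
  qed
  also have "real n * (L * wt n i) - L * wt n i + L * wt n (i+1)/2 + L * wt n (i-1)/2 = real n * L * (wt n i - 1/real n)"
    using i n1 by (simp add: wt_def of_nat_diff field_simps)
  finally have "\<bar>Pop \<beta> n g \<zeta> - Pop \<beta> n g \<zeta>'\<bar> \<le> (1/real n) * (real n * L * (wt n i - 1/real n))"
    using n1 by (simp add: divide_right_mono)
  also have "\<dots> = L * (wt n i - 1/real n)" using n1 by simp
  finally show ?thesis unfolding \<zeta>'_def .
qed

lemma contract_lip:
  assumes \<beta>: "\<beta> > 0" and n1: "n \<ge> 1" and L: "L \<ge> 0" and Lg: "LipP n L g"
  shows "LipP n ((1 - 1/real n^3) * L) (Pop \<beta> n g)"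
proof (rule path_lip)
  have "1/real n^3 \<le> 1" using n1 by simp
  then show "0 \<le> (1 - 1/real n^3) * L" using L by simp
  fix \<zeta> i assume z: "\<zeta> \<in> sos_Omega n" and i: "i \<in> {1..n}" and zi: "\<zeta> i < n"
  have "\<bar>Pop \<beta> n g \<zeta> - Pop \<beta> n g (\<zeta>(i := \<zeta> i + 1))\<bar> \<le> L * (wt n i - 1/real n)"
    by (rule contract_adj[OF \<beta> L Lg z i zi])
  also have "\<dots> \<le> (1 - 1/real n^3) * L * wt n i"
  proof -
    have "wt n i / real n^3 \<le> real n^2 / real n^3" using wt_le[OF i] n1 by (simp add: divide_right_mono)
    also have "\<dots> = 1/real n" using n1 by (simp add: power3_eq_cube power2_eq_square)
    finally have "wt n i / real n^3 \<le> 1/real n" .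
    then have "L * (wt n i / real n^3) \<le> L * (1/real n)" using L by (rule mult_left_mono)
    then show ?thesis by (simp add: algebra_simps)
  qed
  finally show "\<bar>Pop \<beta> n g \<zeta> - Pop \<beta> n g (\<zeta>(i := \<zeta> i + 1))\<bar> \<le> (1 - 1/real n^3) * L * wt n i" .
qed

lemma iter_lip:
  assumes \<beta>: "\<beta> > 0" and n1: "n \<ge> 1" and L: "L \<ge> 0" and Lg: "LipP n L g"
  shows "LipP n ((1 - 1/real n^3)^t * L) ((Pop \<beta> n ^^ t) g)"
proof (induction t)
  case 0 then show ?case using Lg by simp
next
  case (Suc t)
  have k: "0 \<le> 1 - 1/real n^3" using n1 by simp
  have "LipP n ((1 - 1/real n^3) * ((1 - 1/real n^3)^t * L)) (Pop \<beta> n ((Pop \<beta> n ^^ t) g))"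
    using L k by (intro contract_lip[OF \<beta> n1 _ Suc]) simp
  then show ?case by (simp add: mult.assoc)
qed

lemma dd_ge:
  assumes "\<eta> \<in> sos_Omega n" "\<eta>' \<in> sos_Omega n" "\<eta> \<noteq> \<eta>'"
  shows "dd n \<eta> \<eta>' \<ge> real n"
proof -
  obtain k where k: "\<eta> k \<noteq> \<eta>' k" using assms(3) by auto
  have kin: "k \<in> {1..n}" using k omega_out assms(1,2) by metis
  have "real n \<le> wt n k * 1" using wt_ge[OF kin] by simp
  also have "\<dots> \<le> wt n k * \<bar>real (\<eta> k) - real (\<eta>' k)\<bar>"
    using k wt_ge[OF kin] by (intro mult_left_mono) auto
  also have "\<dots> \<le> dd n \<eta> \<eta>'" unfolding dd_def using kin
    by (rule member_le_sum) (auto intro!: mult_nonneg_nonneg wt_nonneg)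
  finally show ?thesis .
qed

lemma dd_le:
  assumes "\<eta> \<in> sos_Omega n" "\<eta>' \<in> sos_Omega n"
  shows "dd n \<eta> \<eta>' \<le> real n ^ 4"
proof -
  have "dd n \<eta> \<eta>' \<le> (\<Sum>k=1..n. real n^2 * real n)" unfolding dd_def
  proof (rule sum_mono)
    fix k assume k: "k \<in> {1..n}"
    have a: "real (\<eta> k) \<le> real n" "real (\<eta>' k) \<le> real n" using omega_le[OF assms(1)] omega_le[OF assms(2)]
      by auto
    then have "\<bar>real (\<eta> k) - real (\<eta>' k)\<bar> \<le> real n" by (simp add: abs_le_iff)
    then show "wt n k * \<bar>real (\<eta> k) - real (\<eta>' k)\<bar> \<le> real n^2 * real n"
      using wt_le[OF k] wt_ge[OF k] by (intro mult_mono) auto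
  qed
  also have "\<dots> = real n ^ 4" by (simp add: power_def)
  finally show ?thesis .
qed

lemma tv_bound:
  assumes \<beta>: "\<beta> > 0" and n1: "n \<ge> 1" and \<xi>: "\<xi> \<in> sos_Omega n"
  shows "tv_dist n (col_law \<beta> n t \<xi>) (sos_mu \<beta> n) \<le> (1 - 1/real n^3)^t * real n^3"
proof -
  let ?\<Omega> = "sos_Omega n"
  let ?\<nu> = "col_law \<beta> n t \<xi>"
  let ?m = "sos_mu \<beta> n"
  define s where "s \<eta> = (if ?\<nu> \<eta> \<ge> ?m \<eta> then 1 else (-1::real))" for \<eta>
  define F where "F = (Pop \<beta> n ^^ t) s"
  define \<kappa> where "\<kappa> = (1 - 1/real n^3)^t"
  have k0: "\<kappa> \<ge> 0" unfolding \<kappa>_def using n1 by simp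
  have sL: "LipP n (2/real n) s" unfolding LipP_def
  proof (intro ballI)
    fix \<eta> \<eta>' assume e: "\<eta> \<in> ?\<Omega>" "\<eta>' \<in> ?\<Omega>"
    show "\<bar>s \<eta> - s \<eta>'\<bar> \<le> 2 / real n * dd n \<eta> \<eta>'"
    proof (cases "\<eta> = \<eta>'")
      case True then show ?thesis using dd_nonneg by simp
    next
      case False
      have "\<bar>s \<eta> - s \<eta>'\<bar> \<le> 2" by (simp add: s_def)
      also have "2 = 2 / real n * real n" using n1 by simp
      also have "\<dots> \<le> 2 / real n * dd n \<eta> \<eta>'" using dd_ge[OF e False] by (intro mult_left_mono) auto
      finally show ?thesis .
    qed
  qed
  have FL: "LipP n (\<kappa> * (2/real n)) F" unfolding F_def \<kappa>_def using sL by (intro iter_lip[OF \<beta> n1]) auto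
  have tv: "tv_dist n ?\<nu> ?m = (1/2) * ((\<Sum>\<eta>\<in>?\<Omega>. ?\<nu> \<eta> * s \<eta>) - (\<Sum>\<eta>\<in>?\<Omega>. ?m \<eta> * s \<eta>))"
  proof -
    have "(\<Sum>\<eta>\<in>?\<Omega>. \<bar>?\<nu> \<eta> - ?m \<eta>\<bar>) = (\<Sum>\<eta>\<in>?\<Omega>. ?\<nu> \<eta> * s \<eta> - ?m \<eta> * s \<eta>)"
      by (rule sum.cong) (auto simp: s_def)
    then show ?thesis unfolding tv_dist_def by (simp add: sum_subtractf)
  qed
  have e1: "(\<Sum>\<eta>\<in>?\<Omega>. ?\<nu> \<eta> * s \<eta>) = F \<xi>" unfolding F_def by (rule law_op[OF \<xi>])
  have e2: "(\<Sum>\<eta>\<in>?\<Omega>. ?m \<eta> * s \<eta>) = (\<Sum>\<eta>\<in>?\<Omega>. ?m \<eta> * F \<eta>)" unfolding F_def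
    by (rule stationary_iter[OF n1, symmetric])
  have "F \<xi> - (\<Sum>\<eta>\<in>?\<Omega>. ?m \<eta> * F \<eta>) = (\<Sum>\<eta>\<in>?\<Omega>. ?m \<eta> * (F \<xi> - F \<eta>))"
    using mu_sum[where n=n and \<beta>=\<beta>] by (simp add: right_diff_distrib sum_subtractf sum_distrib_right[symmetric])
  also have "\<dots> \<le> (\<Sum>\<eta>\<in>?\<Omega>. ?m \<eta> * (\<kappa> * (2/real n) * real n^4))"
  proof (rule sum_mono)
    fix \<eta> assume e: "\<eta> \<in> ?\<Omega>"
    have "F \<xi> - F \<eta> \<le> \<kappa> * (2/real n) * dd n \<xi> \<eta>" using FL \<xi> e unfolding LipP_def by fastforce
    also have "\<dots> \<le> \<kappa> * (2/real n) * real n^4" using dd_le[OF \<xi> e] k0 by (intro mult_left_mono) auto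
    finally show "?m \<eta> * (F \<xi> - F \<eta>) \<le> ?m \<eta> * (\<kappa> * (2/real n) * real n^4)"
      by (intro mult_left_mono mu_nonneg)
  qed
  also have "\<dots> = \<kappa> * (2/real n) * real n^4" unfolding sum_distrib_right[symmetric] mu_sum by simp
  also have "\<dots> = 2 * (\<kappa> * real n^3)" using n1 by (simp add: power_def)
  finally have "F \<xi> - (\<Sum>\<eta>\<in>?\<Omega>. ?m \<eta> * F \<eta>) \<le> 2 * (\<kappa> * real n^3)" .
  then show ?thesis unfolding tv e1 e2 \<kappa>_def by simp
qed

definition Tn :: "nat \<Rightarrow> nat" where
  "Tn n = n^3 * (3 * nat \<lceil>ln (real n)\<rceil> + 2)"

lemma final_num:
  assumes n1: "n \<ge> 1"
  shows "(1 - 1/real n^3)^(Tn n) * real n^3 \<le> 1 / (2 * exp 1)"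
proof -
  define k where "k = nat \<lceil>ln (real n)\<rceil>"
  define K where "K = 3 * k + 2"
  have npos: "real n > 0" using n1 by simp
  have lnn: "ln (real n) \<ge> 0" using n1 by simp
  have kge: "real k \<ge> ln (real n)" unfolding k_def using lnn by linarith
  have T: "Tn n = n^3 * K" by (simp add: Tn_def K_def k_def)
  have k0: "0 \<le> 1 - 1/real n^3" using n1 by simp
  have "1 - 1/real n^3 \<le> exp (-(1/real n^3))" using exp_ge_add_one_self[of "-(1/real n^3)"] by simp
  then have "(1 - 1/real n^3)^(Tn n) \<le> exp (-(1/real n^3))^(Tn n)" using k0 by (rule power_mono)
  also have "\<dots> = exp (real (Tn n) * (-(1/real n^3)))" by (rule exp_of_nat_mult[symmetric])
  also have "real (Tn n) * (-(1/real n^3)) = - real K" unfolding T using npos by simp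
  finally have p: "(1 - 1/real n^3)^(Tn n) \<le> exp (- real K)" .
  have n3: "real n^3 = exp (3 * ln (real n))"
  proof -
    have "exp (real 3 * ln (real n)) = exp (ln (real n))^3" by (rule exp_of_nat_mult)
    then show ?thesis using npos by simp
  qed
  have "(1 - 1/real n^3)^(Tn n) * real n^3 \<le> exp (- real K) * real n^3"
    using p by (intro mult_right_mono) auto
  also have "\<dots> = exp (3 * ln (real n) - real K)" unfolding n3 by (simp add: exp_add[symmetric])
  also have "\<dots> \<le> exp (-2)" unfolding K_def using kge by simp
  also have "exp (-2::real) \<le> 1 / (2 * exp 1)"
  proof -
    have e2: "exp (2::real) = exp 1 * exp 1" by (simp flip: exp_add)
    have "2 \<le> exp (1::real)" using exp_ge_add_one_self[of 1] by simp
    then have "2 * exp 1 \<le> exp 1 * exp (1::real)" by (intro mult_right_mono) auto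
    then have "1 / (exp 1 * exp 1) \<le> 1 / (2 * exp (1::real))" by (intro divide_left_mono) auto
    then show ?thesis by (simp add: exp_minus e2 field_simps)
  qed
  finally show ?thesis .
qed

lemma mix_le:
  assumes \<beta>: "\<beta> > 0" and n1: "n \<ge> 1"
  shows "col_mixing_time \<beta> n \<le> Tn n"
  unfolding col_mixing_time_def
proof (rule Least_le, intro ballI)
  fix \<xi> assume \<xi>: "\<xi> \<in> sos_Omega n"
  show "tv_dist n (col_law \<beta> n (Tn n) \<xi>) (sos_mu \<beta> n) \<le> 1 / (2 * exp 1)"
    using tv_bound[OF \<beta> n1 \<xi>, of "Tn n"] final_num[OF n1] by linarith
qed

theorem theorem3p1:
  fixes \<beta> :: real
  assumes "\<beta> > 0"
  shows "(\<lambda>n. real (col_mixing_time \<beta> n)) \<in> O(\<lambda>n. real n ^ 3 * ln (real n))"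
proof (rule bigoI[where c=8])
  show "\<forall>\<^sub>F n in at_top. norm (real (col_mixing_time \<beta> n)) \<le> 8 * norm (real n ^ 3 * ln (real n))"
    unfolding eventually_at_top_linorder
  proof (intro exI[of _ 3] allI impI)
    fix n :: nat assume n3: "n \<ge> 3"
    have n1: "n \<ge> 1" using n3 by simp
    have ln1: "ln (real n) \<ge> 1"
    proof -
      have "exp 1 \<le> real n" using exp_le n3 by linarith
      then have "ln (exp 1) \<le> ln (real n)" using n3 by (subst ln_le_cancel_iff) auto
      then show ?thesis by simp
    qed
    have kle: "real (nat \<lceil>ln (real n)\<rceil>) \<le> ln (real n) + 1" using ln1 by linarith
    have "real (col_mixing_time \<beta> n) \<le> real (Tn n)" using mix_le[OF assms n1] by simp
    also have "\<dots> = real n^3 * (3 * real (nat \<lceil>ln (real n)\<rceil>) + 2)" by (simp add: Tn_def algebra_simps)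
    also have "\<dots> \<le> real n^3 * (8 * ln (real n))"
    proof -
      have "3 * real (nat \<lceil>ln (real n)\<rceil>) + 2 \<le> 8 * ln (real n)" using kle ln1 by linarith
      then show ?thesis by (intro mult_left_mono) auto
    qed
    finally show "norm (real (col_mixing_time \<beta> n)) \<le> 8 * norm (real n ^ 3 * ln (real n))"
      using ln1 by (simp add: abs_mult)
  qed
qed

end
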